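(* Let $X$ be a compact space and $\mathcal{A}$ a dense subspace of $C(X)$ (real continuous functions, supremum norm) containing the constant functions and closed under finite lattice operations ($f,g\in\mathcal{A}\Rightarrow f\vee g\in\mathcal{A}$). Let $L$ be a Lip-norm on $\mathcal{A}$ satisfying $L(f\vee g)\le L(f)\vee L(g)$ for all $f,g\in\mathcal{A}$, and let $\bar L$ be its closure on $C(X)$. Let $\mathcal{F}$ be a nonempty norm-bounded subset of $\mathcal{A}$ for which there is a constant $k$ with $L(f)\le k$ for all $f\in\mathcal{F}$, and let $g=\sup\{f: f\in\mathcal{F}\}$ (pointwise). Then $g\in C(X)$ and $\bar L(g)\le k$.
   Context: $\mathcal{A}$ is an order-unit space with order unit $1$ and the supremum norm. A Lip-norm on $\mathcal{A}$ is a finite-valued seminorm $L$ with: (1) $L(f)=0$ iff $f$ is constant; (2) $\{f\in\mathcal{A}:L(f)\le1\}$ is norm-closed in $\mathcal{A}$; (3) the image of $\{f:L(f)\le1\}$ in $\mathcal{A}/\mathbb{R}1$ is totally bounded for the quotient norm. The closure $\bar L$: with $\bar{\mathcal{L}}_1$ the closure in $C(X)$ of $\{f\in\mathcal{A}:L(f)\le1\}$, $\bar L(h)=\inf\{r\ge0:h\in r\bar{\mathcal{L}}_1\}\in[0,+\infty]$. *)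

theory Defs
  imports "HOL-Analysis.Analysis"
begin

text \<open>The compact space X is the universe of a topological type 'a with compact UNIV.
  C(X) is the set of continuous real functions on it, with the supremum norm.\<close>

definition CX :: "('a::topological_space \<Rightarrow> real) set" where
  "CX = {f. continuous_on UNIV f}"

definition sup_norm :: "('a \<Rightarrow> real) \<Rightarrow> real" where
  "sup_norm f = (SUP x. \<bar>f x\<bar>)"

text \<open>Lip-norm on the (order-unit) space A, cf. the context: finite-valued seminorm,
  kernel = constants, unit ball norm-closed in A, image of unit ball in A / R1 totally
  bounded for the quotient norm.\<close>

definition lip_norm :: "('a \<Rightarrow> real) set \<Rightarrow> (('a \<Rightarrow> real) \<Rightarrow> real) \<Rightarrow> bool" where
  "lip_norm A L \<longleftrightarrow>
     (\<forall>f\<in>A. 0 \<le> L f) \<and>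
     (\<forall>f\<in>A. \<forall>g\<in>A. L (\<lambda>x. f x + g x) \<le> L f + L g) \<and>
     (\<forall>f\<in>A. \<forall>c::real. L (\<lambda>x. c * f x) = \<bar>c\<bar> * L f) \<and>
     (\<forall>f\<in>A. L f = 0 \<longleftrightarrow> (\<exists>c. f = (\<lambda>x. c))) \<and>
     (\<forall>f\<in>A. (\<forall>e>0. \<exists>h\<in>A. L h \<le> 1 \<and> sup_norm (\<lambda>x. h x - f x) < e) \<longrightarrow> L f \<le> 1) \<and>
     (\<forall>e>0. \<exists>F. finite F \<and> F \<subseteq> {f\<in>A. L f \<le> 1} \<and>
        (\<forall>f\<in>A. L f \<le> 1 \<longrightarrow>
           (\<exists>h\<in>F. \<exists>c::real. sup_norm (\<lambda>x. f x - h x - c) < e)))"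

definition L1bar :: "('a::topological_space \<Rightarrow> real) set \<Rightarrow> (('a \<Rightarrow> real) \<Rightarrow> real) \<Rightarrow> ('a \<Rightarrow> real) set" where
  "L1bar A L = {h\<in>CX. \<forall>e>0. \<exists>f\<in>A. L f \<le> 1 \<and> sup_norm (\<lambda>x. f x - h x) < e}"

definition Lbar :: "('a::topological_space \<Rightarrow> real) set \<Rightarrow> (('a \<Rightarrow> real) \<Rightarrow> real) \<Rightarrow> ('a \<Rightarrow> real) \<Rightarrow> ereal" where
  "Lbar A L h = Inf {ereal r | r. 0 \<le> r \<and> h \<in> (\<lambda>f x. r * f x) ` L1bar A L}"

end

theory Submission
  imports Defs
begin


lemma sup_norm_ge:
  assumes "compact (UNIV::'a::topological_space set)" "continuous_on UNIV (u::'a \<Rightarrow> real)"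
  shows "\<bar>u x\<bar> \<le> sup_norm u"
proof -
  have "compact (range u)" using compact_continuous_image assms by blast
  then have "bounded (range u)" by (rule compact_imp_bounded)
  then obtain a where "\<forall>y\<in>range u. \<bar>y\<bar> \<le> a" unfolding bounded_real by blast
  then have "bdd_above (range (\<lambda>x. \<bar>u x\<bar>))" by (auto intro!: bdd_aboveI[of _ a])
  then show ?thesis unfolding sup_norm_def by (intro cSUP_upper) auto
qed

lemma sup_norm_le:
  assumes "\<And>x. \<bar>u x\<bar> \<le> b" shows "sup_norm u \<le> b"
  unfolding sup_norm_def by (rule cSUP_least) (auto simp: assms)

lemma max_in_A:
  fixes A S :: "('a \<Rightarrow> real) set" and L :: "('a \<Rightarrow> real) \<Rightarrow> real" and k :: real
  assumes "finite S" "S \<noteq> {}" "S \<subseteq> A"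
    and A_max: "\<And>f g. f \<in> A \<Longrightarrow> g \<in> A \<Longrightarrow> (\<lambda>x. max (f x) (g x)) \<in> A"
    and L_max: "\<And>f g. f \<in> A \<Longrightarrow> g \<in> A \<Longrightarrow> L (\<lambda>x. max (f x) (g x)) \<le> max (L f) (L g)"
    and "\<And>f. f \<in> S \<Longrightarrow> L f \<le> k"
  shows "(\<lambda>x. Max ((\<lambda>f. f x) ` S)) \<in> A \<and> L (\<lambda>x. Max ((\<lambda>f. f x) ` S)) \<le> k"
  using assms(1,2,3,6)
proof (induction S rule: finite_ne_induct)
  case (singleton f)
  then show ?case by auto
next
  case (insert f S)
  have eq: "(\<lambda>x. Max ((\<lambda>f. f x) ` insert f S)) = (\<lambda>x. max (f x) (Max ((\<lambda>f. f x) ` S)))"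
    using insert.hyps by (auto simp: Max_insert)
  from insert.IH insert.prems have ih: "(\<lambda>x. Max ((\<lambda>f. f x) ` S)) \<in> A" "L (\<lambda>x. Max ((\<lambda>f. f x) ` S)) \<le> k" by auto
  have fA: "f \<in> A" "L f \<le> k" using insert.prems by auto
  have m: "max (L f) (L (\<lambda>x. Max ((\<lambda>f. f x) ` S))) \<le> k" using fA ih by simp
  show ?case unfolding eq using A_max[OF fA(1) ih(1)] order_trans[OF L_max[OF fA(1) ih(1)] m] by blast
qed


lemma floor_eq_close:
  fixes a b :: real assumes "floor a = floor b" shows "\<bar>a - b\<bar> < 1"
proof -
  have "of_int (floor a) \<le> a" "a < of_int (floor a) + 1" "of_int (floor b) \<le> b" "b < of_int (floor b) + 1"
    by linarith+
  then show ?thesis using assms by linarith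
qed

lemma approx_net:
  fixes A F :: "('a::topological_space \<Rightarrow> real) set" and L :: "('a \<Rightarrow> real) \<Rightarrow> real" and k B e :: real
  assumes X_compact: "compact (UNIV :: 'a set)"
    and A_sub: "A \<subseteq> CX"
    and A_scale: "\<And>f c. f \<in> A \<Longrightarrow> (\<lambda>x. c * f x) \<in> A"
    and L_lip: "lip_norm A L"
    and F_sub: "F \<subseteq> A"
    and F_bdd: "\<forall>f\<in>F. sup_norm f \<le> B"
    and F_L: "\<And>f. f \<in> F \<Longrightarrow> L f \<le> k"
    and e: "e > 0"
  shows "\<exists>S. finite S \<and> S \<subseteq> F \<and> (\<forall>f\<in>F. \<exists>f'\<in>S. \<forall>x. \<bar>f x - f' x\<bar> < e)"
proof -
  define s where "s = max k 1"
  have s: "s > 0" "k \<le> s" unfolding s_def by auto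
  define d where "d = e / (3 * s)"
  have d: "d > 0" unfolding d_def using s e by auto
  have e_eq: "e = 3 * d * s" unfolding d_def using s by auto
  have lip6: "\<forall>e>0. \<exists>F. finite F \<and> F \<subseteq> {f\<in>A. L f \<le> 1} \<and>
        (\<forall>f\<in>A. L f \<le> 1 \<longrightarrow>
           (\<exists>h\<in>F. \<exists>c::real. sup_norm (\<lambda>x. f x - h x - c) < e))"
    using L_lip unfolding lip_norm_def by (elim conjE)
  from lip6[rule_format, OF d] obtain F0 where F0: "finite F0" "F0 \<subseteq> {f\<in>A. L f \<le> 1}"
    "\<forall>f\<in>A. L f \<le> 1 \<longrightarrow> (\<exists>h\<in>F0. \<exists>c::real. sup_norm (\<lambda>x. f x - h x - c) < d)"
    by blast
  have scal: "L (\<lambda>x. (1/s) * f x) = (1/s) * L f" if "f \<in> A" for f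
  proof -
    have "L (\<lambda>x. (1/s) * f x) = \<bar>1/s\<bar> * L f" using L_lip that unfolding lip_norm_def by blast
    then show ?thesis using s by simp
  qed
  have "\<forall>f\<in>F. \<exists>h\<in>F0. \<exists>c::real. sup_norm (\<lambda>x. (1/s) * f x - h x - c) < d"
  proof
    fix f assume f: "f \<in> F"
    then have fA: "f \<in> A" using F_sub by auto
    have "L (\<lambda>x. (1/s) * f x) \<le> 1"
      using scal[OF fA] F_L[OF f] s by (simp add: divide_le_eq_1)
    then show "\<exists>h\<in>F0. \<exists>c::real. sup_norm (\<lambda>x. (1/s) * f x - h x - c) < d"
      using F0(3) A_scale[OF fA] by blast
  qed
  then obtain hf cf where hc: "\<And>f. f \<in> F \<Longrightarrow> hf f \<in> F0"
    "\<And>f. f \<in> F \<Longrightarrow> sup_norm (\<lambda>x. (1/s) * f x - hf f x - cf f) < d"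
    by metis
  have cont: "continuous_on UNIV f" if "f \<in> A" for f
    using that A_sub unfolding CX_def by auto
  have pw: "\<bar>(1/s) * f x - hf f x - cf f\<bar> < d" if f: "f \<in> F" for f x
  proof -
    have "continuous_on UNIV (\<lambda>x. (1/s) * f x - hf f x - cf f)"
      using cont[of f] cont[of "hf f"] f F_sub hc(1)[OF f] F0(2)
      by (intro continuous_intros) auto
    from sup_norm_ge[OF X_compact this, of x] hc(2)[OF f] show ?thesis by linarith
  qed
  define x0 :: 'a where "x0 = undefined"
  define Hm where "Hm = (\<Sum>h\<in>F0. \<bar>h x0\<bar>)"
  define K where "K = d + B / s + Hm"
  have cbound: "\<bar>cf f\<bar> \<le> K" if f: "f \<in> F" for f
  proof -
    have fA: "f \<in> A" using f F_sub by auto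
    have "\<bar>f x0\<bar> \<le> sup_norm f" by (rule sup_norm_ge[OF X_compact cont[OF fA]])
    moreover have "sup_norm f \<le> B" using F_bdd f by auto
    ultimately have "\<bar>f x0\<bar> \<le> B" by linarith
    then have a: "\<bar>(1/s) * f x0\<bar> \<le> B / s" using s by (simp add: abs_mult divide_right_mono)
    have b: "\<bar>hf f x0\<bar> \<le> Hm" unfolding Hm_def
      by (rule member_le_sum[where f="\<lambda>h. \<bar>h x0\<bar>"]) (auto intro: hc(1)[OF f] F0(1))
    show ?thesis using pw[OF f, of x0] a b unfolding K_def by linarith
  qed
  define N where "N = \<lceil>K / d\<rceil> + 1"
  define key where "key f = (hf f, \<lfloor>cf f / d\<rfloor>)" for f
  have keyF: "key ` F \<subseteq> F0 \<times> {-N..N}"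
  proof
    fix y assume "y \<in> key ` F"
    then obtain f where f: "f \<in> F" and y: "y = key f" by auto
    have "\<bar>cf f\<bar> / d \<le> K / d" by (rule divide_right_mono) (use cbound[OF f] d in auto)
    then have q: "\<bar>cf f / d\<bar> \<le> K / d" using d by (simp add: abs_divide)
    define q where "q = cf f / d"
    have q1: "real_of_int \<lfloor>q\<rfloor> \<le> q" "q < real_of_int \<lfloor>q\<rfloor> + 1" "K / d \<le> real_of_int \<lceil>K / d\<rceil>"
      by linarith+
    have "real_of_int \<lfloor>q\<rfloor> \<le> real_of_int N" "real_of_int (-N) < real_of_int \<lfloor>q\<rfloor> + 1"
    proof -
      have qq: "q \<le> K / d" "- q \<le> K / d" using q unfolding q_def[symmetric] abs_le_iff by auto
      have "real_of_int N = real_of_int \<lceil>K / d\<rceil> + 1" by (simp add: N_def)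
      then show "real_of_int \<lfloor>q\<rfloor> \<le> real_of_int N" "real_of_int (-N) < real_of_int \<lfloor>q\<rfloor> + 1"
        using qq q1 by linarith+
    qed
    then have "-N \<le> \<lfloor>cf f / d\<rfloor> \<and> \<lfloor>cf f / d\<rfloor> \<le> N" unfolding q_def[symmetric]
      by linarith
    then show "y \<in> F0 \<times> {-N..N}" using y hc(1)[OF f] unfolding key_def by auto
  qed
  have fin: "finite (key ` F)" using finite_subset[OF keyF] F0(1) by auto
  define rep where "rep y = (SOME f. f \<in> F \<and> key f = y)" for y
  have rep: "rep (key f) \<in> F \<and> key (rep (key f)) = key f" if "f \<in> F" for f
    unfolding rep_def by (rule someI[of _ f]) (use that in auto)
  define S where "S = rep ` key ` F"
  have "finite S" unfolding S_def using fin by auto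
  moreover have "S \<subseteq> F" unfolding S_def using rep by auto
  moreover have "\<forall>f\<in>F. \<exists>f'\<in>S. \<forall>x. \<bar>f x - f' x\<bar> < e"
  proof
    fix f assume f: "f \<in> F"
    define f' where "f' = rep (key f)"
    have f': "f' \<in> F" "hf f' = hf f" "\<lfloor>cf f' / d\<rfloor> = \<lfloor>cf f / d\<rfloor>"
      using rep[OF f] unfolding f'_def key_def by auto
    have "\<bar>cf f' / d - cf f / d\<bar> < 1" by (rule floor_eq_close) (use f' in simp)
    moreover have "cf f' - cf f = (cf f' / d - cf f / d) * d" using d by (simp add: field_simps)
    then have "\<bar>cf f' - cf f\<bar> = \<bar>cf f' / d - cf f / d\<bar> * d" using d by (simp add: abs_mult)
    ultimately have cc: "\<bar>cf f' - cf f\<bar> < d" using mult_strict_right_mono[OF _ d] by fastforce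
    have "\<forall>x. \<bar>f x - f' x\<bar> < e"
    proof
      fix x
      have "\<bar>(1/s) * f x - (1/s) * f' x\<bar> < 3 * d"
        using pw[OF f, of x] pw[OF f'(1), of x] cc unfolding f'(2) by linarith
      moreover have "1/s * f x - 1/s * f' x = (f x - f' x) / s" by (simp add: diff_divide_distrib)
      ultimately have "\<bar>(f x - f' x) / s\<bar> < 3 * d" by simp
      then have "\<bar>f x - f' x\<bar> / s < 3 * d" using s by (simp add: abs_divide)
      then show "\<bar>f x - f' x\<bar> < e" unfolding e_eq using s by (simp add: divide_less_eq mult.commute)
    qed
    moreover have "f' \<in> S" unfolding S_def f'_def using f by auto
    ultimately show "\<exists>f'\<in>S. \<forall>x. \<bar>f x - f' x\<bar> < e" by blast
  qed
  ultimately show ?thesis by blast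
qed

theorem lemma8p2:
  fixes A :: "('a::topological_space \<Rightarrow> real) set"
    and L :: "('a \<Rightarrow> real) \<Rightarrow> real"
    and \<F> :: "('a \<Rightarrow> real) set"
    and k :: real
  assumes X_compact: "compact (UNIV :: 'a set)"
    and A_sub: "A \<subseteq> CX"
    and A_add: "\<And>f g. f \<in> A \<Longrightarrow> g \<in> A \<Longrightarrow> (\<lambda>x. f x + g x) \<in> A"
    and A_scale: "\<And>f c. f \<in> A \<Longrightarrow> (\<lambda>x. c * f x) \<in> A"
    and A_dense: "\<And>h e. h \<in> CX \<Longrightarrow> e > 0 \<Longrightarrow> \<exists>f\<in>A. sup_norm (\<lambda>x. f x - h x) < e"
    and A_const: "\<And>c. (\<lambda>x. c) \<in> A"
    and A_max: "\<And>f g. f \<in> A \<Longrightarrow> g \<in> A \<Longrightarrow> (\<lambda>x. max (f x) (g x)) \<in> A"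
    and A_min: "\<And>f g. f \<in> A \<Longrightarrow> g \<in> A \<Longrightarrow> (\<lambda>x. min (f x) (g x)) \<in> A"
    and L_lip: "lip_norm A L"
    and L_max: "\<And>f g. f \<in> A \<Longrightarrow> g \<in> A \<Longrightarrow> L (\<lambda>x. max (f x) (g x)) \<le> max (L f) (L g)"
    and F_ne: "\<F> \<noteq> {}"
    and F_sub: "\<F> \<subseteq> A"
    and F_bdd: "\<exists>B. \<forall>f\<in>\<F>. sup_norm f \<le> B"
    and F_L: "\<And>f. f \<in> \<F> \<Longrightarrow> L f \<le> k"
  shows "(\<lambda>x. SUP f\<in>\<F>. f x) \<in> CX \<and> Lbar A L (\<lambda>x. SUP f\<in>\<F>. f x) \<le> ereal k"
  proof -
  obtain B where B: "\<forall>f\<in>\<F>. sup_norm f \<le> B" using F_bdd by blast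
  define g where "g = (\<lambda>x. SUP f\<in>\<F>. f x)"
  have cont: "continuous_on UNIV f" if "f \<in> A" for f
    using that A_sub unfolding CX_def by auto
  have bnd: "\<bar>f x\<bar> \<le> B" if f: "f \<in> \<F>" for f x
  proof -
    have fA: "f \<in> A" using f F_sub by auto
    have "\<bar>f x\<bar> \<le> sup_norm f" by (rule sup_norm_ge[OF X_compact cont[OF fA]])
    moreover have "sup_norm f \<le> B" using B f by auto
    ultimately show ?thesis by linarith
  qed
  have bdd: "bdd_above ((\<lambda>f. f x) ` \<F>)" for x
    using bnd by (intro bdd_aboveI[of _ B]) (auto simp: abs_le_iff)
  obtain f0 where f0: "f0 \<in> \<F>" using F_ne by auto
  have "0 \<le> L f0" using L_lip f0 F_sub unfolding lip_norm_def by auto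
  then have k0: "0 \<le> k" using F_L[OF f0] by linarith
  have scal: "L (\<lambda>x. c * f x) = \<bar>c\<bar> * L f" if "f \<in> A" for f c
    using L_lip that unfolding lip_norm_def by blast
  have approx: "\<exists>M. M \<in> A \<and> L M \<le> k \<and> (\<forall>x. \<bar>M x - g x\<bar> \<le> e)" if e: "e > 0" for e
  proof -
    obtain S where S: "finite S" "S \<subseteq> \<F>" "\<forall>f\<in>\<F>. \<exists>f'\<in>S. \<forall>x. \<bar>f x - f' x\<bar> < e"
      using approx_net[OF X_compact A_sub A_scale L_lip F_sub B F_L e] by blast
    have Sne: "S \<noteq> {}" using S(3) f0 by blast
    define M where "M = (\<lambda>x. Max ((\<lambda>f. f x) ` S))"
    have MA: "M \<in> A \<and> L M \<le> k" unfolding M_def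
      by (rule max_in_A[OF S(1) Sne _ A_max L_max]) (use S(2) F_sub F_L in auto)
    have "\<bar>M x - g x\<bar> \<le> e" for x
    proof -
      have "M x \<in> (\<lambda>f. f x) ` S" unfolding M_def using S(1) Sne by (intro Max_in) auto
      then obtain f where f: "f \<in> S" "M x = f x" by auto
      have "f x \<le> g x" unfolding g_def using f S(2) bdd by (intro cSUP_upper) auto
      moreover have "g x \<le> M x + e" unfolding g_def
      proof (rule cSUP_least)
        show "\<F> \<noteq> {}" by (rule F_ne)
        fix f assume "f \<in> \<F>"
        then obtain f' where f': "f' \<in> S" "\<bar>f x - f' x\<bar> < e" using S(3) by blast
        have "f' x \<le> M x" unfolding M_def using f'(1) S(1) by (intro Max_ge) auto
        then show "f x \<le> M x + e" using f'(2) by linarith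
      qed
      ultimately show ?thesis using f(2) by linarith
    qed
    then show ?thesis using MA by blast
  qed
  then obtain Mf where Mf: "\<And>e. e > 0 \<Longrightarrow> Mf e \<in> A \<and> L (Mf e) \<le> k \<and> (\<forall>x. \<bar>Mf e x - g x\<bar> \<le> e)"
    by metis
  define Ms where "Ms n = Mf (1 / real (Suc n))" for n
  have Ms: "Ms n \<in> A" "\<bar>Ms n x - g x\<bar> \<le> 1 / real (Suc n)" for n x
    using Mf[of "1 / real (Suc n)"] unfolding Ms_def by auto
  have ul: "uniform_limit UNIV Ms g sequentially"
    unfolding uniform_limit_sequentially_iff
  proof (intro allI impI)
    fix e :: real assume e: "e > 0"
    obtain N where N: "1 / real (Suc N) < e" using reals_Archimedean[OF e]
      by (auto simp: inverse_eq_divide)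
    have "\<forall>n\<ge>N. \<forall>x\<in>UNIV. dist (Ms n x) (g x) < e"
    proof (intro allI impI ballI)
      fix n x assume n: "N \<le> n"
      have "1 / real (Suc n) \<le> 1 / real (Suc N)" using n by (simp add: frac_le)
      then show "dist (Ms n x) (g x) < e" using Ms(2)[of n x] N unfolding dist_real_def by linarith
    qed
    then show "\<exists>N. \<forall>n\<ge>N. \<forall>x\<in>UNIV. dist (Ms n x) (g x) < e" by blast
  qed
  have gcont: "continuous_on UNIV g"
    by (rule uniform_limit_theorem[OF _ ul]) (auto intro!: always_eventually cont Ms(1))
  have gCX: "g \<in> CX" unfolding CX_def using gcont by auto
  have Lr: "Lbar A L g \<le> ereal r" if r: "r > k" for r
  proof -
    have r0: "r > 0" using r k0 by linarith
    define h where "h = (\<lambda>x. (1/r) * g x)"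
    have hCX: "h \<in> CX" unfolding CX_def h_def using continuous_on_mult[OF continuous_on_const gcont, of "1/r"] by simp
    have "h \<in> L1bar A L" unfolding L1bar_def
    proof (intro CollectI conjI allI impI hCX)
      fix e :: real assume e: "e > 0"
      define M where "M = Mf (r * e / 2)"
      have M: "M \<in> A" "L M \<le> k" "\<And>x. \<bar>M x - g x\<bar> \<le> r * e / 2"
        using Mf[of "r * e / 2"] r0 e unfolding M_def by auto
      define f where "f = (\<lambda>x. (1/r) * M x)"
      have fA: "f \<in> A" unfolding f_def using A_scale[OF M(1)] .
      have "L f = (1/r) * L M" unfolding f_def using scal[OF M(1), of "1/r"] r0 by (simp only: abs_of_pos zero_less_divide_1_iff)
      also have "\<dots> \<le> (1/r) * r" using M(2) r r0 by (intro mult_left_mono) auto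
      finally have Lf: "L f \<le> 1" using r0 by simp
      have "sup_norm (\<lambda>x. f x - h x) \<le> e / 2"
      proof (rule sup_norm_le)
        fix x
        have "f x - h x = (M x - g x) / r" unfolding f_def h_def by (simp add: diff_divide_distrib)
        then have "\<bar>f x - h x\<bar> = \<bar>M x - g x\<bar> / r" using r0 by (simp add: abs_divide)
        also have "\<dots> \<le> (r * e / 2) / r" using M(3)[of x] r0 by (intro divide_right_mono) auto
        also have "\<dots> = e / 2" using r0 by simp
        finally show "\<bar>f x - h x\<bar> \<le> e / 2" .
      qed
      then have "sup_norm (\<lambda>x. f x - h x) < e" using e by linarith
      then show "\<exists>f\<in>A. L f \<le> 1 \<and> sup_norm (\<lambda>x. f x - h x) < e" using fA Lf by blast
    qed
    moreover have "g = (\<lambda>x. r * h x)" unfolding h_def using r0 by auto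
    ultimately have "g \<in> (\<lambda>f x. r * f x) ` L1bar A L" by blast
    then have "ereal r \<in> {ereal r | r. 0 \<le> r \<and> g \<in> (\<lambda>f x. r * f x) ` L1bar A L}" using r0 by auto
    then show ?thesis unfolding Lbar_def by (rule Inf_lower)
  qed
  have "Lbar A L g \<le> ereal k"
  proof (rule ereal_le_epsilon2)
    fix e :: real assume "0 < e"
    then have "Lbar A L g \<le> ereal (k + e)" by (intro Lr) linarith
    then show "Lbar A L g \<le> ereal k + ereal e" by simp
  qed
  then show ?thesis using gCX unfolding g_def by (intro conjI)
qed

thm_deps lemma8p2

end
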